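(* Equip $\mathbb R^{n\times n}$ with the Frobenius metric $g(X,Y)=\langle X,Y\rangle_F$, and equip $\mathbb R^\ell$ with the metric $g^A$ induced by the map $A:\mathbb R^\ell\to\mathbb R^{n\times n}$, $A(x)=A_0+\sum_{i=1}^\ell x_iA_i$. Then $g^A_x(u,v)=u^TBv$ for all $x,u,v\in\mathbb R^\ell$, and the Riemannian gradient of $F$ with respect to $g^A$ is $\nabla_{g^A}F(x)=B^{-1}\nabla F(x)$. Consequently the Riemannian gradient descent iteration $x^{k+1}=x^k-\nabla_{g^A}F(x^k)$ on $(\mathbb R^\ell,g^A)$ coincides with the Lift and Projection iteration: given $x^k$ and $\rho$, with $Z^k=(Q_1\;Q_2)\operatorname{diag}(\Lambda^*,\Lambda_2)(Q_1\;Q_2)^T$ and $x^{k+1}$ the minimiser of $\|Z^k-A(x)\|_F$ over $x\in\mathbb R^\ell$, one has $x^{k+1}=x^k-\nabla_{g^A}F(x^k)$.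
   Context: $A_0,\dots,A_\ell\in\mathbb R^{n\times n}$ are linearly independent real symmetric matrices; $\lambda_1(x)\le\dots\le\lambda_n(x)$ are the eigenvalues of $A(x)$. Given real numbers $\lambda_1^*\le\dots\le\lambda_m^*$ ($m\le n$) and $\rho\in S_n$: $r_i(x)=\lambda_{\rho_i}(x)-\lambda_i^*$, $F(x)=\frac12\sum_{i=1}^m r_i(x)^2$, $\nabla F(x)$ its Euclidean gradient, $\nabla F(x)=J_r(x)^Tr(x)$ with $(J_r)_{ij}=q_i^TA_jq_i$ where $q_i$ is the unit eigenvector for $\lambda_{\rho_i}(x)$. $B\in\mathbb R^{\ell\times\ell}$, $B_{ij}=\langle A_i,A_j\rangle_F=\operatorname{Tr}(A_i^TA_j)$. $A(x^k)=(Q_1\;Q_2)\operatorname{diag}(\Lambda_1,\Lambda_2)(Q_1\;Q_2)^T$ is a spectral decomposition with $(Q_1\;Q_2)$ orthogonal, $\Lambda_1=\operatorname{diag}(\lambda_{\rho_1}(x^k),\dots,\lambda_{\rho_m}(x^k))$, $\Lambda_2=\operatorname{diag}(\lambda_{\rho_{m+1}}(x^k),\dots,\lambda_{\rho_n}(x^k))$, $\Lambda^*=\operatorname{diag}(\lambda_1^*,\dots,\lambda_m^* )$. The induced metric is $g^A_x(u,v)=g(DA(x)[u],DA(x)[v])$, and the Riemannian gradient $\nabla_{g^A}F$ is defined by $DF(x)[v]=g^A_x(v,\nabla_{g^A}F(x))$ for all $v$. *)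

theory Defs
  imports "HOL-Analysis.Analysis" "HOL-Computational_Algebra.Polynomial"
begin

definition frob :: "real^'n^'n \<Rightarrow> real^'n^'n \<Rightarrow> real" where
  "frob X Y = trace (transpose X ** Y)"

definition frob_norm :: "real^'n^'n \<Rightarrow> real" where
  "frob_norm X = sqrt (frob X X)"

text \<open>Characteristic polynomial det(tI - M) and the eigenvalues of M counted with
  multiplicity, in increasing order; eig M i is the (i+1)-th smallest (0-based index).\<close>
definition charpoly :: "real^'n^'n \<Rightarrow> real poly" where
  "charpoly M = det (mat [:0, 1:] - map_matrix (\<lambda>a. [:a:]) M)"

definition eig :: "real^'n^'n \<Rightarrow> nat \<Rightarrow> real" where
  "eig M i = sorted_list_of_multiset (proots (charpoly M)) ! i"

definition Amap :: "real^'n^'n \<Rightarrow> ('l::finite \<Rightarrow> real^'n^'n) \<Rightarrow> real^'l \<Rightarrow> real^'n^'n" where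
  "Amap A0 A x = A0 + (\<Sum>i\<in>UNIV. x$i *\<^sub>R A i)"

definition Bmat :: "('l::finite \<Rightarrow> real^'n^'n) \<Rightarrow> real^'l^'l" where
  "Bmat A = (\<chi> i j. frob (A i) (A j))"

definition gA :: "real^'n^'n \<Rightarrow> ('l::finite \<Rightarrow> real^'n^'n) \<Rightarrow> real^'l \<Rightarrow> real^'l \<Rightarrow> real^'l \<Rightarrow> real" where
  "gA A0 A x u v = frob (frechet_derivative (Amap A0 A) (at x) u)
                        (frechet_derivative (Amap A0 A) (at x) v)"

definition riem_grad :: "real^'n^'n \<Rightarrow> ('l::finite \<Rightarrow> real^'n^'n) \<Rightarrow> (real^'l \<Rightarrow> real) \<Rightarrow> real^'l \<Rightarrow> real^'l" where
  "riem_grad A0 A F x = (THE w. \<forall>v. frechet_derivative F (at x) v = gA A0 A x v w)"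

definition Fobj :: "real^'n^'n \<Rightarrow> ('l::finite \<Rightarrow> real^'n^'n) \<Rightarrow> nat \<Rightarrow> (nat \<Rightarrow> nat) \<Rightarrow> (nat \<Rightarrow> real) \<Rightarrow> real^'l \<Rightarrow> real" where
  "Fobj A0 A m \<rho> lstar x = (1/2) * (\<Sum>i<m. (eig (Amap A0 A x) (\<rho> i) - lstar i)\<^sup>2)"

definition outer :: "real^'n \<Rightarrow> real^'n \<Rightarrow> real^'n^'n" where
  "outer p q = (\<chi> a b. p$a * q$b)"

end

theory Submission
  imports Defs
begin

lemma frob_inner: "frob X Y = X \<bullet> Y"
  unfolding frob_def trace_def matrix_matrix_mult_def transpose_def inner_vec_def
  by (simp add: inner_real_def) (rule sum.swap)

lemma frob_norm_eq: "frob_norm X = norm X"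
  by (simp add: frob_norm_def frob_inner norm_eq_sqrt_inner)

lemma inner_outer: "(M::real^'n^'n) \<bullet> outer q q = q \<bullet> (M *v q)"
  unfolding inner_vec_def outer_def matrix_vector_mult_def
  by (simp add: sum_distrib_left mult.assoc mult.left_commute)

lemma matrix_inv_right': "invertible M \<Longrightarrow> M ** matrix_inv M = mat 1"
  unfolding matrix_inv_def invertible_def by (rule someI_ex[THEN conjunct1]) 

definition Lmap :: "('l::finite \<Rightarrow> real^'n^'n) \<Rightarrow> real^'l \<Rightarrow> real^'n^'n" where
  "Lmap A u = (\<Sum>i\<in>UNIV. u$i *\<^sub>R A i)"

lemma Amap_L: "Amap A0 A x = A0 + Lmap A x"
  by (simp add: Amap_def Lmap_def)

lemma Lmap_linear: "linear (Lmap A)"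
  by (rule linearI) (simp_all add: Lmap_def scaleR_add_left sum.distrib scaleR_sum_right)

lemma Lmap_bl: "bounded_linear (Lmap A)"
  using Lmap_linear linear_conv_bounded_linear by blast

lemma Amap_deriv: "(Amap A0 A has_derivative Lmap A) (at x)"
proof -
  have "((\<lambda>x. Lmap A x + A0) has_derivative Lmap A) (at x)"
    by (rule has_derivative_add_const) (rule bounded_linear.has_derivative[OF Lmap_bl has_derivative_ident])
  moreover have "(\<lambda>x. Lmap A x + A0) = Amap A0 A"
    by (rule ext) (simp add: Amap_L add.commute)
  ultimately show ?thesis by simp
qed

lemma frechet_Amap: "frechet_derivative (Amap A0 A) (at x) = Lmap A"
  using frechet_derivative_at[OF Amap_deriv[of A0 A x]] by simp

lemma AjL: "A j \<bullet> Lmap A y = (Bmat A *v y) $ j"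
  by (simp add: Lmap_def inner_sum_right Bmat_def matrix_vector_mult_def frob_inner mult.commute)

lemma LL: "Lmap A u \<bullet> Lmap A v = u \<bullet> (Bmat A *v v)"
proof -
  have "Lmap A u \<bullet> Lmap A v = (\<Sum>i\<in>UNIV. u$i * (A i \<bullet> Lmap A v))"
    by (simp add: Lmap_def inner_sum_left)
  also have "\<dots> = u \<bullet> (Bmat A *v v)"
    by (simp only: AjL) (simp add: inner_vec_def)
  finally show ?thesis .
qed

lemma gA_eq: "gA A0 A x u v = u \<bullet> (Bmat A *v v)"
  by (simp add: gA_def frechet_Amap frob_inner LL)

lemma Binv:
  assumes indep: "\<And>c0 c. c0 *\<^sub>R A0 + (\<Sum>i\<in>UNIV. c i *\<^sub>R A i) = 0 \<Longrightarrow> c0 = 0 \<and> (\<forall>i. c i = 0)"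
  shows L0: "\<And>w. Lmap A w = 0 \<Longrightarrow> w = 0"
    and Bker: "\<And>w. Bmat A *v w = 0 \<Longrightarrow> w = 0"
    and Binvr: "Bmat A ** matrix_inv (Bmat A) = mat 1"
proof -
  show L0: "\<And>w. Lmap A w = 0 \<Longrightarrow> w = 0"
  proof -
    fix w assume "Lmap A w = 0"
    then have "0 *\<^sub>R A0 + (\<Sum>i\<in>UNIV. w$i *\<^sub>R A i) = 0" by (simp add: Lmap_def)
    from indep[OF this] show "w = 0" by (simp add: vec_eq_iff)
  qed
  show Bk: "\<And>w. Bmat A *v w = 0 \<Longrightarrow> w = 0"
  proof -
    fix w assume "Bmat A *v w = 0"
    then have "Lmap A w \<bullet> Lmap A w = 0" by (simp add: LL)
    then show "w = 0" using L0 by simp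
  qed
  have "invertible (Bmat A)"
    unfolding invertible_left_inverse matrix_left_invertible_ker using Bk by blast
  then show "Bmat A ** matrix_inv (Bmat A) = mat 1" by (rule matrix_inv_right')
qed

lemma riem_grad_eq:
  assumes indep: "\<And>c0 c. c0 *\<^sub>R A0 + (\<Sum>i\<in>UNIV. c i *\<^sub>R A i) = 0 \<Longrightarrow> c0 = 0 \<and> (\<forall>i. c i = 0)"
    and g: "GDERIV F x :> g"
  shows "riem_grad A0 A F x = matrix_inv (Bmat A) *v g"
proof -
  have fd: "frechet_derivative F (at x) = (\<lambda>h. h \<bullet> g)"
    using frechet_derivative_at[OF g[unfolded gderiv_def]] by simp
  have Bw0: "Bmat A *v (matrix_inv (Bmat A) *v g) = g"
    by (simp add: matrix_vector_mul_assoc Binvr[OF indep])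
  show ?thesis
    unfolding riem_grad_def fd gA_eq
  proof (rule the_equality)
    show "\<forall>v. v \<bullet> g = v \<bullet> (Bmat A *v (matrix_inv (Bmat A) *v g))" by (simp add: Bw0)
  next
    fix w assume h: "\<forall>v. v \<bullet> g = v \<bullet> (Bmat A *v w)"
    have "(g - Bmat A *v w) \<bullet> (g - Bmat A *v w) = 0"
      using h[rule_format, of "g - Bmat A *v w"] by (simp add: inner_diff_right)
    then have "g = Bmat A *v w" by simp
    then have "Bmat A *v w = Bmat A *v (matrix_inv (Bmat A) *v g)" by (metis Bw0)
    then have "Bmat A *v (w - matrix_inv (Bmat A) *v g) = 0"
      by (simp add: matrix_vector_mult_diff_distrib)
    then show "w = matrix_inv (Bmat A) *v g" using Bker[OF indep] by force
  qed
qed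

theorem mainTheorem3:
  fixes A0 :: "real^'n^'n" and A :: "'l::finite \<Rightarrow> real^'n^'n"
    and m :: nat and \<rho> :: "nat \<Rightarrow> nat" and lstar :: "nat \<Rightarrow> real"
  assumes symA0: "transpose A0 = A0"
    and symA: "\<And>i. transpose (A i) = A i"
    and indep: "\<And>c0 c. c0 *\<^sub>R A0 + (\<Sum>i\<in>UNIV. c i *\<^sub>R A i) = 0 \<Longrightarrow> c0 = 0 \<and> (\<forall>i. c i = 0)"
    and mn: "m \<le> CARD('n)"
    and lsorted: "\<And>i j. i \<le> j \<Longrightarrow> j < m \<Longrightarrow> lstar i \<le> lstar j"
    and perm: "\<rho> permutes {..<CARD('n)}"
  shows
    "(\<forall>x u v. gA A0 A x u v = u \<bullet> (Bmat A *v v))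
     \<and> (\<forall>x g. GDERIV (Fobj A0 A m \<rho> lstar) x :> g \<longrightarrow>
              riem_grad A0 A (Fobj A0 A m \<rho> lstar) x = matrix_inv (Bmat A) *v g)
     \<and> (\<forall>xk q xnext.
          (\<forall>i<CARD('n). \<forall>j<CARD('n). q i \<bullet> q j = (if i = j then 1 else 0))
          \<and> Amap A0 A xk = (\<Sum>j<CARD('n). eig (Amap A0 A xk) (\<rho> j) *\<^sub>R outer (q j) (q j))
          \<and> GDERIV (Fobj A0 A m \<rho> lstar) xk :>
               (\<chi> j. \<Sum>i<m. (q i \<bullet> (A j *v q i)) * (eig (Amap A0 A xk) (\<rho> i) - lstar i))
          \<and> (let Z = (\<Sum>j<m. lstar j *\<^sub>R outer (q j) (q j))
                   + (\<Sum>j\<in>{m..<CARD('n)}. eig (Amap A0 A xk) (\<rho> j) *\<^sub>R outer (q j) (q j))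
             in \<forall>x. frob_norm (Z - Amap A0 A xnext) \<le> frob_norm (Z - Amap A0 A x))
          \<longrightarrow> xnext = xk - riem_grad A0 A (Fobj A0 A m \<rho> lstar) xk)"
proof (intro conjI allI impI)
  fix x u v show "gA A0 A x u v = u \<bullet> (Bmat A *v v)" by (rule gA_eq)
next
  fix x g assume "GDERIV (Fobj A0 A m \<rho> lstar) x :> g"
  then show "riem_grad A0 A (Fobj A0 A m \<rho> lstar) x = matrix_inv (Bmat A) *v g"
    apply (rule riem_grad_eq[rotated])
    using indep by blast
next
  fix xk and q :: "nat \<Rightarrow> real^'n" and xnext
  assume H: "(\<forall>i<CARD('n). \<forall>j<CARD('n). q i \<bullet> q j = (if i = j then 1 else 0))
          \<and> Amap A0 A xk = (\<Sum>j<CARD('n). eig (Amap A0 A xk) (\<rho> j) *\<^sub>R outer (q j) (q j))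
          \<and> GDERIV (Fobj A0 A m \<rho> lstar) xk :>
               (\<chi> j. \<Sum>i<m. (q i \<bullet> (A j *v q i)) * (eig (Amap A0 A xk) (\<rho> i) - lstar i))
          \<and> (let Z = (\<Sum>j<m. lstar j *\<^sub>R outer (q j) (q j))
                   + (\<Sum>j\<in>{m..<CARD('n)}. eig (Amap A0 A xk) (\<rho> j) *\<^sub>R outer (q j) (q j))
             in \<forall>x. frob_norm (Z - Amap A0 A xnext) \<le> frob_norm (Z - Amap A0 A x))"
  define e where "e j = eig (Amap A0 A xk) (\<rho> j)" for j
  define g where "g = (\<chi> j. \<Sum>i<m. (q i \<bullet> (A j *v q i)) * (e i - lstar i))"
  define Z where "Z = (\<Sum>j<m. lstar j *\<^sub>R outer (q j) (q j))
                   + (\<Sum>j\<in>{m..<CARD('n)}. e j *\<^sub>R outer (q j) (q j))"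
  define Binv where "Binv = matrix_inv (Bmat A)"
  define xs where "xs = xk - Binv *v g"
  define E where "E = Z - Amap A0 A xs"
  have dec: "Amap A0 A xk = (\<Sum>j<CARD('n). e j *\<^sub>R outer (q j) (q j))"
    using H by (simp add: e_def)
  have gd: "GDERIV (Fobj A0 A m \<rho> lstar) xk :> g" using H by (simp add: g_def e_def)
  have mini: "\<forall>x. norm (Z - Amap A0 A xnext) \<le> norm (Z - Amap A0 A x)"
    using H by (simp add: Z_def e_def Let_def frob_norm_eq)
  have rg: "riem_grad A0 A (Fobj A0 A m \<rho> lstar) xk = Binv *v g"
    unfolding Binv_def using gd apply (rule riem_grad_eq[rotated])
    using indep by blast
  have split: "{..<CARD('n)} = {..<m} \<union> {m..<CARD('n)}" using mn by auto
  have D: "Z - Amap A0 A xk = (\<Sum>j<m. (lstar j - e j) *\<^sub>R outer (q j) (q j))"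
    unfolding dec Z_def split
    by (subst sum.union_disjoint) (auto simp: scaleR_diff_left sum_subtractf)
  have AjD: "A j \<bullet> (Z - Amap A0 A xk) = - g $ j" for j
    unfolding D g_def
    by (simp add: inner_sum_right inner_outer sum_negf[symmetric] algebra_simps)
  have Lsplit: "Amap A0 A x = Amap A0 A y + Lmap A (x - y)" for x y
    by (simp add: Amap_L linear_diff[OF Lmap_linear])
  have BB: "Bmat A *v (Binv *v g) = g"
    by (simp add: Binv_def matrix_vector_mul_assoc Binvr[OF indep])
  have AjE: "A j \<bullet> E = 0" for j
  proof -
    have "E = (Z - Amap A0 A xk) - Lmap A (xs - xk)"
      unfolding E_def using Lsplit[of xs xk] by simp
    then have "A j \<bullet> E = A j \<bullet> (Z - Amap A0 A xk) - A j \<bullet> Lmap A (xs - xk)"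
      by (simp only: inner_diff_right[of "A j" "Z - Amap A0 A xk"])
    then have 1: "A j \<bullet> E = - g $ j - (Bmat A *v (xs - xk)) $ j"
      by (simp only: AjD AjL)
    have 2: "xs - xk = - (Binv *v g)" by (simp add: xs_def)
    have 3: "Bmat A *v (- (Binv *v g)) = - (Bmat A *v (Binv *v g))"
      by (simp add: vec_eq_iff matrix_vector_mult_def sum_negf)
    show ?thesis unfolding 1 2 3 BB by simp
  qed
  have LE: "Lmap A y \<bullet> E = 0" for y
    by (simp add: Lmap_def inner_sum_left AjE)
  have pyth: "(norm (Z - Amap A0 A x))\<^sup>2 = (norm E)\<^sup>2 + (norm (Lmap A (x - xs)))\<^sup>2" for x
  proof -
    have "Z - Amap A0 A x = E - Lmap A (x - xs)"
      unfolding E_def using Lsplit[of x xs] by simp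
    then show ?thesis
      by (simp add: power2_norm_eq_inner inner_diff_left inner_diff_right LE inner_commute[of E "Lmap A (x - xs)"])
  qed
  have "norm (Z - Amap A0 A xnext) \<le> norm (Z - Amap A0 A xs)" using mini by blast
  then have "(norm (Z - Amap A0 A xnext))\<^sup>2 \<le> (norm (Z - Amap A0 A xs))\<^sup>2"
    by (simp add: power_mono)
  then have "(norm (Lmap A (xnext - xs)))\<^sup>2 \<le> 0"
    using pyth[of xnext] pyth[of xs] by (simp add: linear_0[OF Lmap_linear])
  then have "Lmap A (xnext - xs) = 0" by simp
  then have "xnext - xs = 0" apply (rule L0[rotated])
    using indep by blast
  then show "xnext = xk - riem_grad A0 A (Fobj A0 A m \<rho> lstar) xk"
    by (simp add: rg xs_def)
qed

end
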